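(* The number $4$ is extraordinary.
   Context: For a positive integer $n$, $\sigma(n)=\sum_{d\mid n} d$. For integers $n>1$ define $G(n)=\dfrac{\sigma(n)}{n\log\log n}$ (natural logarithms). A positive integer $N$ is called extraordinary if $N$ is composite and satisfies: (i) $G(N)\ge G(N/p)$ for every prime $p$ dividing $N$, and (ii) $G(N)\ge G(aN)$ for every positive integer $a$. One may use Robin's unconditional bound $G(n)<e^\gamma+\dfrac{0.6483}{(\log\log n)^2}$ for all $n>1$, where $\gamma$ is the Euler–Mascheroni constant. *)

theory Defs
  imports "HOL-Computational_Algebra.Primes" Complex_Main
begin

definition divisor_sigma :: "nat \<Rightarrow> nat" where
  "divisor_sigma n = (\<Sum>d\<in>{d. d dvd n \<and> d > 0}. d)"

definition G :: "nat \<Rightarrow> real" where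
  "G n = real (divisor_sigma n) / (real n * ln (ln (real n)))"

definition extraordinary :: "nat \<Rightarrow> bool" where
  "extraordinary N \<longleftrightarrow>
     N > 1 \<and> \<not> prime N \<and>
     (\<forall>p. prime p \<and> p dvd N \<longrightarrow> G N \<ge> G (N div p)) \<and>
     (\<forall>a. a > 0 \<longrightarrow> G N \<ge> G (a * N))"

end

theory Submission
  imports Defs
begin


lemma ln_lb: assumes "(1::real) \<le> x" shows "2*(x-1)/(x+1) \<le> ln x"
proof -
  let ?f = "\<lambda>t::real. ln t - 2*(t-1)/(t+1)"
  have "?f 1 \<le> ?f x"
  proof (rule DERIV_nonneg_imp_nondecreasing[OF assms])
    fix t :: real assume t: "1 \<le> t" "t \<le> x"
    have "DERIV ?f t :> (1/t - 4/(t+1)^2)"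
      using t by (auto intro!: derivative_eq_intros simp: field_simps power2_eq_square)
    moreover have "1/t - 4/(t+1)^2 \<ge> 0"
    proof -
      have "(t+1)^2 - 4*t = (t-1)^2" by (simp add: power2_eq_square algebra_simps)
      then have "4*t \<le> (t+1)^2" by (metis diff_ge_0_iff_ge zero_le_power2)
      then have "4/(t+1)^2 \<le> 1/t" using t by (simp add: divide_simps)
      then show ?thesis by simp
    qed
    ultimately show "\<exists>y. DERIV ?f t :> y \<and> 0 \<le> y" by blast
  qed
  then show ?thesis by simp
qed

lemma ln_ub: assumes "(1::real) \<le> x" shows "ln x \<le> (x - 1/x)/2"
proof -
  let ?f = "\<lambda>t::real. (t - 1/t)/2 - ln t"
  have "?f 1 \<le> ?f x"
  proof (rule DERIV_nonneg_imp_nondecreasing[OF assms])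
    fix t :: real assume t: "1 \<le> t" "t \<le> x"
    have "DERIV ?f t :> ((1 + 1/t^2)/2 - 1/t)"
      using t by (auto intro!: derivative_eq_intros simp: power2_eq_square)
    moreover have "(1 + 1/t^2)/2 - 1/t \<ge> 0"
    proof -
      have "(1 + 1/t^2)/2 - 1/t = (1 - 1/t)^2/2" by (simp add: power2_eq_square algebra_simps divide_simps)
      moreover have "0 \<le> (1 - 1/t)^2/2" by simp
      ultimately show ?thesis by linarith
    qed
    ultimately show "\<exists>y. DERIV ?f t :> y \<and> 0 \<le> y" by blast
  qed
  then show ?thesis by simp
qed

lemma ln2_decomp: "ln (2::real) = 7 * ln (10/9) - 2 * ln (25/24) + 3 * ln (81/80)"
proof -
  have e: "(10/9::real)^7 = 2 * (25/24)^2 / (81/80)^3" by (simp add: power_divide)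
  have "ln ((10/9::real)^7) = ln (2 * (25/24)^2 / (81/80)^3)" by (simp only: e)
  then have "7 * ln (10/9::real) = ln 2 + 2 * ln (25/24) - 3 * ln (81/80)"
    by (simp add: ln_realpow ln_mult ln_div)
  then show ?thesis by linarith
qed

lemma ln2_lo: "6924/10000 \<le> ln (2::real)"
proof -
  have "2*(10/9-1)/(10/9+1) \<le> ln (10/9::real)" by (rule ln_lb) simp
  moreover have "ln (25/24::real) \<le> (25/24 - 1/(25/24))/2" by (rule ln_ub) simp
  moreover have "2*(81/80-1)/(81/80+1) \<le> ln (81/80::real)" by (rule ln_lb) simp
  ultimately show ?thesis unfolding ln2_decomp by simp
qed

lemma ln2_hi: "ln (2::real) \<le> 6946/10000"
proof -
  have "ln (10/9::real) \<le> (10/9 - 1/(10/9))/2" by (rule ln_ub) simp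
  moreover have "2*(25/24-1)/(25/24+1) \<le> ln (25/24::real)" by (rule ln_lb) simp
  moreover have "ln (81/80::real) \<le> (81/80 - 1/(81/80))/2" by (rule ln_ub) simp
  ultimately show ?thesis unfolding ln2_decomp by simp
qed



lemma geom_bound:
  fixes p :: real assumes "p \<ge> 2"
  shows "(\<Sum>i\<le>k. p^i) \<le> p^k * (p/(p-1))"
proof -
  have "(\<Sum>i\<le>k. p^i) * (p - 1) = p^(Suc k) - 1"
    by (induction k) (simp_all add: algebra_simps)
  then have "(\<Sum>i\<le>k. p^i) * (p - 1) \<le> p^k * p" by simp
  then show ?thesis using assms by (simp add: field_simps)
qed

lemma divisor_sigma_1: "divisor_sigma 1 = 1"
proof -
  have "{d::nat. d dvd 1 \<and> d > 0} = {1}" by auto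
  then show ?thesis unfolding divisor_sigma_def by simp
qed

lemma sigma_prod:
  "n > 0 \<Longrightarrow> real (divisor_sigma n) \<le> real n * (\<Prod>p\<in>prime_factors n. real p / (real p - 1))"
proof (induction n rule: less_induct)
  case (less n)
  show ?case
  proof (cases "n = 1")
    case True then show ?thesis using divisor_sigma_1 by simp
  next
    case False
    then obtain p where p: "prime p" "p dvd n" using prime_factor_nat by blast
    define k where "k = multiplicity p n"
    define m where "m = n div p ^ k"
    have pk: "p ^ k dvd n" unfolding k_def by (rule multiplicity_dvd)
    have nm: "n = p ^ k * m" unfolding m_def using pk by simp
    have npm: "\<not> p dvd m" unfolding m_def k_def by (rule multiplicity_decompose) (use less.prems p in auto)
    have k1: "k \<ge> 1" unfolding k_def using p less.prems
      by (simp add: Suc_le_eq prime_multiplicity_gt_zero_iff)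
    have p2: "p \<ge> 2" using p by (simp add: prime_ge_2_nat)
    have m0: "m > 0" using nm less.prems by (cases "m = 0") auto
    have "p ^ k \<ge> 2" using p2 k1
      by (metis dual_order.trans order.refl power_increasing power_one_right le_numeral_extra(2) one_le_numeral)
    then have mn: "m < n" using nm m0 by (metis less_le_trans mult_less_cancel2 nat_mult_1 numeral_le_one_iff semiring_norm(69) Suc_1 Suc_le_lessD)
    have IH: "real (divisor_sigma m) \<le> real m * (\<Prod>q\<in>prime_factors m. real q / (real q - 1))"
      using less.IH[OF mn m0] .
    define D where "D = (\<lambda>x::nat. {d. d dvd x \<and> d > 0})"
    have finD: "finite (D x)" if "x > 0" for x
      unfolding D_def using that by (auto intro: finite_subset[of _ "{..x}"] dvd_imp_le)
    have sub: "D n \<subseteq> (\<lambda>(i,e). p^i * e) ` ({..k} \<times> D m)"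
    proof
      fix d assume "d \<in> D n"
      then have "d dvd p^k * m" "d > 0" unfolding D_def using nm by auto
      then obtain x y where xy: "d = x * y" "x dvd p^k" "y dvd m" using dvd_productE by blast
      then obtain i where i: "i \<le> k" "x = p^i" using divides_primepow_nat[OF p(1)] by blast
      have "y > 0" using xy m0 by (metis dvd_0_left_iff gr0I)
      then show "d \<in> (\<lambda>(i,e). p^i * e) ` ({..k} \<times> D m)"
        using xy i unfolding D_def by (auto intro!: image_eqI[of _ _ "(i,y)"])
    qed
    have "real (divisor_sigma n) = (\<Sum>d\<in>D n. real d)" unfolding divisor_sigma_def D_def by simp
    also have "\<dots> \<le> (\<Sum>d\<in>(\<lambda>(i,e). p^i * e) ` ({..k} \<times> D m). real d)"
      by (rule sum_mono2) (use sub finD m0 in auto)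
    also have "\<dots> \<le> (\<Sum>x\<in>{..k} \<times> D m. real ((\<lambda>(i,e). p^i * e) x))"
      using sum_image_le[of "{..k} \<times> D m" real "\<lambda>(i,e). p^i * e"] finD m0 by (simp add: comp_def)
    also have "\<dots> = (\<Sum>(i,e)\<in>{..k} \<times> D m. real p ^ i * real e)"
      by (rule sum.cong) auto
    also have "\<dots> = (\<Sum>i\<le>k. \<Sum>e\<in>D m. real p ^ i * real e)"
      by (rule sum.cartesian_product[symmetric])
    also have "\<dots> = (\<Sum>i\<le>k. real p ^ i) * (\<Sum>e\<in>D m. real e)"
      by (simp add: sum_product)
    also have "(\<Sum>e\<in>D m. real e) = real (divisor_sigma m)" unfolding divisor_sigma_def D_def by simp
    also have "(\<Sum>i\<le>k. real p ^ i) * real (divisor_sigma m)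
        \<le> (real p ^ k * (real p / (real p - 1))) * (real m * (\<Prod>q\<in>prime_factors m. real q / (real q - 1)))"
      by (rule mult_mono[OF geom_bound IH]) (use p2 in auto)
    also have "prime_factors n = insert p (prime_factors m)"
    proof -
      have "prime_factors n = {q. prime q \<and> q dvd n}" using less.prems by (simp add: prime_factors_dvd)
      also have "\<dots> = insert p {q. prime q \<and> q dvd m}"
        using p(1) k1 nm by (auto simp: prime_dvd_mult_iff prime_dvd_power_iff primes_dvd_imp_eq)
      finally show ?thesis using m0 by (simp add: prime_factors_dvd)
    qed
    moreover have "p \<notin> prime_factors m" using npm by auto
    ultimately show ?thesis using nm by (simp add: algebra_simps)
  qed
qed



lemma harm_bound: "n \<ge> 1 \<Longrightarrow> (\<Sum>d\<in>{1..n}. 1 / real d) \<le> 1 + ln (real n)"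
proof (induction n rule: dec_induct)
  case base then show ?case by simp
next
  case (step n)
  have n: "real n \<ge> 1" using step by simp
  have "ln (1/real n + 1) \<ge> (1/real n)/(1 + 1/real n)" by (rule ln_add1_ge) (use n in simp)
  moreover have "1/real n + 1 = real (Suc n) / real n" using n by (simp add: field_simps)
  moreover have "(1/real n)/(1 + 1/real n) = 1 / real (Suc n)" using n by (simp add: field_simps)
  ultimately have "1 / real (Suc n) \<le> ln (real (Suc n)) - ln (real n)"
    using n by (simp add: ln_div)
  then show ?case using step by simp
qed

lemma sigma_harm: assumes "n > 0" shows "real (divisor_sigma n) \<le> real n * (1 + ln (real n))"
proof -
  define D where "D = {d::nat. d dvd n \<and> d > 0}"
  have finD: "finite D" unfolding D_def using assms by (auto intro: finite_subset[of _ "{..n}"] dvd_imp_le)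
  have "real (divisor_sigma n) = (\<Sum>d\<in>D. real d)" unfolding divisor_sigma_def D_def by simp
  also have "\<dots> = (\<Sum>d\<in>D. real (n div d))"
    apply (rule sum.reindex_bij_witness[of _ "\<lambda>d. n div d" "\<lambda>d. n div d"])
    apply (auto simp: D_def dvd_div_eq_mult div_div_eq_right assms elim!: dvdE intro: dvd_triv_left)
    by (metis assms mult_0_right neq0_conv)+
  also have "\<dots> = (\<Sum>d\<in>D. real n * (1 / real d))"
    by (rule sum.cong) (auto simp: D_def real_of_nat_div)
  also have "\<dots> = real n * (\<Sum>d\<in>D. 1 / real d)" by (simp add: sum_distrib_left)
  also have "(\<Sum>d\<in>D. 1 / real d) \<le> (\<Sum>d\<in>{1..n}. 1 / real d)"
    by (rule sum_mono2) (auto simp: D_def assms dvd_imp_le Suc_le_eq)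
  also have "\<dots> \<le> 1 + ln (real n)" by (rule harm_bound) (use assms in simp)
  finally show ?thesis using assms by (simp add: mult_left_mono)
qed



lemma prod_primes_dvd:
  fixes x :: nat
  assumes "finite A" "\<And>p. p \<in> A \<Longrightarrow> prime p \<and> p dvd x"
  shows "(\<Prod>A) dvd x"
  using assms
proof (induction A rule: finite_induct)
  case empty then show ?case by simp
next
  case (insert p A)
  have "coprime p (\<Prod>A)"
    using insert by (intro prod_coprime_right) (metis insertCI primes_coprime)
  then show ?case using insert by (simp add: divides_mult)
qed

lemma central_binom_le: "(2*m+1 choose m) \<le> (4::nat)^m"
proof -
  have s: "(2*m+1 choose m) = (2*m+1 choose (m+1))"
    using binomial_symmetric[of m "2*m+1"] by simp
  have "(2*m+1 choose m) + (2*m+1 choose (m+1)) = (\<Sum>k\<in>{m,m+1}. (2*m+1) choose k)" by simp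
  also have "\<dots> \<le> (\<Sum>k\<le>2*m+1. (2*m+1) choose k)" by (rule sum_mono2) auto
  also have "\<dots> = 2^(2*m+1)" by (rule choose_row_sum)
  finally have "2 * (2*m+1 choose m) \<le> 2 * 4^m" using s by (simp add: power_mult power_add)
  then show ?thesis by simp
qed

lemma primorial_le: "(\<Prod>{p::nat. prime p \<and> p \<le> N}) \<le> 4^N"
proof (induction N rule: less_induct)
  case (less N)
  show ?case
  proof (cases "N \<le> 2")
    case True
    then have "N = 0 \<or> N = 1 \<or> N = 2" by auto
    moreover have e0: "{p::nat. prime p \<and> p \<le> 0} = {}" and e1: "{p::nat. prime p \<and> p \<le> 1} = {}"
      by (auto dest: prime_gt_1_nat)
    moreover have e2: "{p::nat. prime p \<and> p \<le> 2} = {2}"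
      by (auto dest: prime_gt_1_nat)
    ultimately show ?thesis
    proof (elim disjE)
      assume "N = 0" then show ?thesis by (subst e0[folded \<open>N = 0\<close>]) simp
    next
      assume "N = 1" then show ?thesis by (subst e1[folded \<open>N = 1\<close>]) simp
    next
      assume "N = 2" then show ?thesis by (subst e2[folded \<open>N = 2\<close>]) simp
    qed
  next
    case False
    show ?thesis
    proof (cases "even N")
      case True
      have "{p::nat. prime p \<and> p \<le> N} = {p. prime p \<and> p \<le> N - 1}"
      proof (intro set_eqI iffI)
        fix p assume p: "p \<in> {p::nat. prime p \<and> p \<le> N}"
        have "p \<noteq> N"
        proof
          assume "p = N"
          then have "prime N" using p by simp
          moreover have "2 dvd N" using True by simp
          ultimately have "N = 2" by (metis prime_nat_iff numeral_One numeral_eq_iff semiring_norm(85))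
          then show False using \<open>\<not> N \<le> 2\<close> by simp
        qed
        then show "p \<in> {p. prime p \<and> p \<le> N - 1}" using p by auto
      qed auto
      also have "\<Prod>\<dots> \<le> 4^(N-1)" using less.IH[of "N-1"] \<open>\<not> N \<le> 2\<close> by simp
      also have "\<dots> \<le> 4^N" by (rule power_increasing) auto
      finally show ?thesis .
    next
      case False
      then obtain m where N: "N = 2*m+1" by (metis oddE)
      have m1: "m \<ge> 1" using N \<open>\<not> N \<le> 2\<close> by simp
      define Q where "Q = {p::nat. prime p \<and> m+1 < p \<and> p \<le> 2*m+1}"
      have split: "{p::nat. prime p \<and> p \<le> N} = {p. prime p \<and> p \<le> m+1} \<union> Q"
        unfolding Q_def N by auto
      have fin1: "finite {p::nat. prime p \<and> p \<le> m+1}" by (rule finite_subset[of _ "{..m+1}"]) auto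
      have fin2: "finite Q" unfolding Q_def by (rule finite_subset[of _ "{..2*m+1}"]) auto
      have disj: "{p::nat. prime p \<and> p \<le> m+1} \<inter> Q = {}" unfolding Q_def by auto
      have QC: "\<Prod>Q dvd (2*m+1 choose m)"
      proof (rule prod_primes_dvd[OF fin2])
        fix p assume "p \<in> Q"
        then have p: "prime p" "m+1 < p" "p \<le> 2*m+1" unfolding Q_def by auto
        have "fact m * fact (m+1) * (2*m+1 choose m) = (fact (2*m+1) :: nat)"
          using binomial_fact_lemma[of m "2*m+1"] by (simp add: mult_2)
        moreover have "p dvd (fact (2*m+1) :: nat)" using p prime_dvd_fact_iff[of p "2*m+1"] by blast
        ultimately have "p dvd fact m * fact (m+1) * (2*m+1 choose m)" by simp
        moreover have "\<not> p dvd (fact m :: nat)" "\<not> p dvd (fact (m+1) :: nat)"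
          using p prime_dvd_fact_iff[of p m] prime_dvd_fact_iff[of p "m+1"] by auto
        ultimately show "prime p \<and> p dvd (2*m+1 choose m)" using p by (simp add: prime_dvd_mult_iff)
      qed
      have "\<Prod>Q \<le> (2*m+1 choose m)" by (rule dvd_imp_le[OF QC]) simp
      also have "\<dots> \<le> 4^m" by (rule central_binom_le)
      finally have Qle: "\<Prod>Q \<le> 4^m" .
      have "\<Prod>{p::nat. prime p \<and> p \<le> m+1} \<le> 4^(m+1)" using less.IH[of "m+1"] N m1 by simp
      then have "\<Prod>{p::nat. prime p \<and> p \<le> N} \<le> 4^(m+1) * 4^m"
        unfolding split prod.union_disjoint[OF fin1 fin2 disj] using Qle by (rule mult_le_mono)
      also have "\<dots> = 4^N" unfolding N by (simp add: power_add[symmetric])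
      finally show ?thesis .
    qed
  qed
qed



definition PU :: "nat \<Rightarrow> nat set" where "PU N = {p. prime p \<and> p \<le> N}"

lemma PU_eq: "PU N = {p\<in>{..N}. prime p}" unfolding PU_def by auto
lemma finite_PU[simp]: "finite (PU N)" unfolding PU_eq by simp

lemma prod_pf_le: fixes m :: nat assumes "m > 0" shows "(\<Prod>p\<in>prime_factors m. p) \<le> m"
proof -
  have "(\<Prod>p\<in>prime_factors m. p) \<le> (\<Prod>p\<in>prime_factors m. p ^ multiplicity p m)"
  proof (rule prod_mono)
    fix p assume p: "p \<in> prime_factors m"
    then have "multiplicity p m \<ge> 1" using assms
      by (simp add: Suc_le_eq prime_multiplicity_gt_zero_iff in_prime_factors_iff)
    moreover have "p \<ge> 1" using p by (metis in_prime_factors_imp_prime prime_ge_1_nat)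
    ultimately show "0 \<le> p \<and> p \<le> p ^ multiplicity p m"
      by (metis zero_le power_increasing power_one_right)
  qed
  also have "\<dots> = m" using prime_factorization_nat[OF assms] by simp
  finally show ?thesis .
qed

lemma R_le_lnfact:
  "(\<Sum>p\<in>PU N. ln (real p) * real (N div p)) \<le> ln (fact N)"
proof (induction N)
  case 0 then show ?case by (simp add: PU_def)
next
  case (Suc N)
  define g where "g = (\<lambda>p. if prime p \<and> p dvd Suc N then ln (real p) else 0)"
  have step: "(\<Sum>p\<in>PU (Suc N). ln (real p) * real (Suc N div p))
      = (\<Sum>p\<in>PU (Suc N). ln (real p) * real (N div p)) + (\<Sum>p\<in>PU (Suc N). g p)"
    unfolding sum.distrib[symmetric]
  proof (rule sum.cong)
    fix p assume "p \<in> PU (Suc N)"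
    then have p: "prime p" by (simp add: PU_def)
    show "ln (real p) * real (Suc N div p) = ln (real p) * real (N div p) + g p"
      using p by (simp add: div_Suc g_def dvd_eq_mod_eq_0 algebra_simps)
  qed simp
  have a: "(\<Sum>p\<in>PU (Suc N). ln (real p) * real (N div p)) = (\<Sum>p\<in>PU N. ln (real p) * real (N div p))"
  proof (cases "prime (Suc N)")
    case True
    then have "PU (Suc N) = insert (Suc N) (PU N)" unfolding PU_def by auto
    then show ?thesis by (simp add: PU_def)
  next
    case False
    then have "PU (Suc N) = PU N" unfolding PU_def using le_Suc_eq by auto
    then show ?thesis by simp
  qed
  have b: "(\<Sum>p\<in>PU (Suc N). g p) = (\<Sum>p\<in>prime_factors (Suc N). ln (real p))"
  proof -
    have "(\<Sum>p\<in>PU (Suc N). g p) = (\<Sum>p\<in>PU (Suc N). if p dvd Suc N then ln (real p) else 0)"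
      unfolding g_def by (rule sum.cong) (auto simp: PU_def)
    also have "\<dots> = (\<Sum>p\<in>{p\<in>PU (Suc N). p dvd Suc N}. ln (real p))"
      by (rule sum.inter_filter[symmetric]) simp
    also have "{p\<in>PU (Suc N). p dvd Suc N} = prime_factors (Suc N)"
      unfolding PU_def by (auto simp: prime_factors_dvd dvd_imp_le)
    finally show ?thesis .
  qed
  have c: "(\<Sum>p\<in>prime_factors (Suc N). ln (real p)) \<le> ln (real (Suc N))"
  proof -
    have "(\<Sum>p\<in>prime_factors (Suc N). ln (real p)) = ln (\<Prod>p\<in>prime_factors (Suc N). real p)"
      by (rule ln_prod[symmetric]) (auto dest: in_prime_factors_imp_prime prime_gt_0_nat)
    also have "\<dots> = ln (real (\<Prod>p\<in>prime_factors (Suc N). p))" by (simp add: of_nat_prod)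
    also have "\<dots> \<le> ln (real (Suc N))"
    proof (rule ln_mono)
      show "real (\<Prod>p\<in>prime_factors (Suc N). p) \<le> real (Suc N)" by (metis of_nat_le_iff prod_pf_le zero_less_Suc)
      have "(\<Prod>p\<in>prime_factors (Suc N). p) > 0"
        by (rule prod_pos) (meson in_prime_factors_imp_prime prime_gt_0_nat)
      then show "0 < real (\<Prod>p\<in>prime_factors (Suc N). p)" by (simp only: of_nat_0_less_iff)
    qed
    finally show ?thesis .
  qed
  have "ln (fact (Suc N) :: real) = ln (real (Suc N)) + ln (fact N)"
    by (simp add: ln_mult)
  then show ?case using Suc step a b c by linarith
qed

lemma lnfact_le: "N \<ge> 1 \<Longrightarrow> ln (fact N :: real) \<le> real N * ln (real N) - real N + 1 + ln (real N)"
proof (induction N rule: dec_induct)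
  case base then show ?case by simp
next
  case (step N)
  have n: "real N \<ge> 1" using step by simp
  have "ln (1/real N + 1) \<ge> (1/real N)/(1 + 1/real N)" by (rule ln_add1_ge) (use n in simp)
  moreover have "1/real N + 1 = real (Suc N) / real N" using n by (simp add: field_simps)
  moreover have "(1/real N)/(1 + 1/real N) = 1 / real (Suc N)" using n by (simp add: field_simps)
  ultimately have "1 / real (Suc N) \<le> ln (real (Suc N)) - ln (real N)"
    using n by (simp add: ln_div)
  then have "1 \<le> real (Suc N) * (ln (real (Suc N)) - ln (real N))"
    by (simp add: field_simps)
  moreover have "ln (fact (Suc N) :: real) = ln (real (Suc N)) + ln (fact N)"
    by (simp add: ln_mult)
  ultimately show ?case using step.IH by (simp add: algebra_simps)
qed

lemma theta_le: "(\<Sum>p\<in>PU N. ln (real p)) \<le> real N * ln 4"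
proof -
  have pos: "\<And>p. p \<in> PU N \<Longrightarrow> real p > 0" by (auto simp: PU_def prime_gt_0_nat)
  have "(\<Sum>p\<in>PU N. ln (real p)) = ln (\<Prod>p\<in>PU N. real p)"
    by (rule ln_prod[symmetric]) (use pos in auto)
  also have "\<dots> = ln (real (\<Prod>(PU N)))" by (simp add: of_nat_prod)
  also have "\<dots> \<le> ln (real (4^N))"
  proof (rule ln_mono)
    show "real (\<Prod>(PU N)) \<le> real (4^N)"
      using primorial_le[of N] unfolding PU_def by (simp only: of_nat_le_iff)
    have "\<Prod>(PU N) > 0" by (rule prod_pos) (auto simp: PU_def prime_gt_0_nat)
    then show "0 < real (\<Prod>(PU N))" by (simp only: of_nat_0_less_iff)
  qed
  also have "\<dots> = real N * ln 4" by (simp add: ln_realpow)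
  finally show ?thesis .
qed

lemma S_le:
  assumes N: "N \<ge> 5"
  shows "(\<Sum>p\<in>PU N. ln (real p) / real p) \<le> ln (real N) + 1/2"
proof -
  have each: "(real N + 1) * (ln (real p) / real p) - ln (real p) \<le> ln (real p) * real (N div p)"
    if p: "p \<in> PU N" for p
  proof -
    have pp: "p > 0" using p by (auto simp: PU_def prime_gt_0_nat)
    have lp: "ln (real p) \<ge> 0" using pp by simp
    have "N = p * (N div p) + N mod p" by simp
    moreover have "N mod p < p" using pp by simp
    ultimately have "N + 1 \<le> p * (N div p) + p" by linarith
    then have "real N + 1 \<le> real p * real (N div p) + real p" by (metis of_nat_le_iff of_nat_add of_nat_mult of_nat_1)
    then have "(real N + 1) / real p \<le> real (N div p) + 1" using pp by (simp add: field_simps)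
    then have "ln (real p) * ((real N + 1) / real p) \<le> ln (real p) * (real (N div p) + 1)"
      using lp by (rule mult_left_mono)
    then show ?thesis by (simp add: algebra_simps)
  qed
  have "(real N + 1) * (\<Sum>p\<in>PU N. ln (real p) / real p) - (\<Sum>p\<in>PU N. ln (real p))
      = (\<Sum>p\<in>PU N. (real N + 1) * (ln (real p) / real p) - ln (real p))"
    by (simp add: sum_distrib_left sum_subtractf)
  also have "\<dots> \<le> (\<Sum>p\<in>PU N. ln (real p) * real (N div p))" by (rule sum_mono) (rule each)
  also have "\<dots> \<le> ln (fact N)" by (rule R_le_lnfact)
  also have "\<dots> \<le> real N * ln (real N) - real N + 1 + ln (real N)" by (rule lnfact_le) (use N in simp)
  finally have A: "(real N + 1) * (\<Sum>p\<in>PU N. ln (real p) / real p)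
      \<le> real N * ln (real N) - real N + 1 + ln (real N) + real N * ln 4"
    using theta_le[of N] by linarith
  have "ln (4::real) = 2 * ln 2" using ln_realpow[of 2 2] by simp
  then have l4: "ln (4::real) \<le> 13892/10000" using ln2_hi by simp
  have "real N * ln 4 \<le> real N * (13892/10000)" using l4 by (intro mult_left_mono) auto
  moreover have "real N \<ge> 5" using N by simp
  moreover have "(real N + 1) * (ln (real N) + 1/2) = real N * ln (real N) + ln (real N) + real N / 2 + 1/2"
    by (simp add: algebra_simps)
  ultimately have "real N * ln (real N) - real N + 1 + ln (real N) + real N * ln 4 \<le> (real N + 1) * (ln (real N) + 1/2)"
    by linarith
  with A have "(real N + 1) * (\<Sum>p\<in>PU N. ln (real p) / real p) \<le> (real N + 1) * (ln (real N) + 1/2)"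
    by linarith
  then show ?thesis by (simp add: mult_le_cancel_left_pos add_pos_nonneg)
qed



definition SS :: "nat \<Rightarrow> real" where "SS N = (\<Sum>p\<in>PU N. ln (real p) / real p)"

lemma key_ineq:
  fixes u v T :: real
  assumes "0 < u" "u < v" "T \<le> u"
  shows "0 \<le> T * (1/v - 1/u) + (ln v - ln u)"
proof -
  have neg: "1/v - 1/u \<le> 0" using assms by (simp add: field_simps)
  have "u * (1/v - 1/u) \<le> T * (1/v - 1/u)" using assms(3) neg by (rule mult_right_mono_neg)
  moreover have "u * (1/v - 1/u) = u/v - 1" using assms by (simp add: field_simps)
  moreover have "ln (u/v) \<le> u/v - 1" by (rule ln_le_minus_one) (use assms in simp)
  moreover have "ln (u/v) = ln u - ln v" using assms by (simp add: ln_div)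
  ultimately show ?thesis by linarith
qed

lemma abel_step:
  assumes P0: "P0 \<ge> 2" and hyp: "\<And>m. m \<ge> P0 \<Longrightarrow> SS m \<le> ln (real m) + c" and N: "N \<ge> P0"
  shows "(\<Sum>p\<in>PU N - PU P0. 1 / (real p - 1)) \<le> (SS N - c) / ln (real N) + ln (ln (real N))
           - ln (ln (real P0)) - (SS P0 - c) / ln (real P0) + 1 / real P0 - 1 / real N"
  using N
proof (induction N rule: dec_induct)
  case base then show ?case by simp
next
  case (step N)
  have N2: "real N \<ge> 2" using step P0 by simp
  have lnN: "ln (real N) > 0" using N2 by simp
  have lnlt: "ln (real N) < ln (real (Suc N))" using N2 by simp
  have X: "0 \<le> (SS N - c) * (1 / ln (real (Suc N)) - 1 / ln (real N)) + (ln (ln (real (Suc N))) - ln (ln (real N)))"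
    by (rule key_ineq[OF lnN lnlt]) (use hyp[of N] step in simp)
  define a where "a = (if prime (Suc N) then ln (real (Suc N)) / real (Suc N) else 0)"
  define b where "b = (if prime (Suc N) then 1 / real N else 0)"
  have SSs: "SS (Suc N) = SS N + a"
  proof (cases "prime (Suc N)")
    case True
    then have "PU (Suc N) = insert (Suc N) (PU N)" unfolding PU_def by auto
    then show ?thesis using True unfolding SS_def a_def by (simp add: PU_def)
  next
    case False
    then have "PU (Suc N) = PU N" unfolding PU_def using le_Suc_eq by auto
    then show ?thesis using False unfolding SS_def a_def by simp
  qed
  have Ls: "(\<Sum>p\<in>PU (Suc N) - PU P0. 1 / (real p - 1)) = (\<Sum>p\<in>PU N - PU P0. 1 / (real p - 1)) + b"
  proof (cases "prime (Suc N)")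
    case True
    then have "PU (Suc N) - PU P0 = insert (Suc N) (PU N - PU P0)" unfolding PU_def using step by auto
    then show ?thesis using True unfolding b_def by (simp add: PU_def)
  next
    case False
    then have "PU (Suc N) = PU N" unfolding PU_def using le_Suc_eq by auto
    then show ?thesis using False unfolding b_def by simp
  qed
  have lnS: "ln (real (Suc N)) > 0" using lnN lnlt by linarith
  have ab: "a / ln (real (Suc N)) = (if prime (Suc N) then 1 / real (Suc N) else 0)"
    unfolding a_def using lnS by simp
  have bb: "b \<le> a / ln (real (Suc N)) + 1 / real N - 1 / real (Suc N)"
    unfolding ab b_def using N2 by (simp add: frac_le)
  have eq: "(SS N + a - c) / ln (real (Suc N)) = (SS N - c) / ln (real (Suc N)) + a / ln (real (Suc N))"
    by (simp add: add_divide_distrib diff_divide_distrib)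
  have eq2: "(SS N - c) * (1 / ln (real (Suc N)) - 1 / ln (real N)) = (SS N - c) / ln (real (Suc N)) - (SS N - c) / ln (real N)"
    by (simp add: algebra_simps)
  have IH: "(\<Sum>p\<in>PU N - PU P0. 1 / (real p - 1)) \<le> (SS N - c) / ln (real N) + ln (ln (real N))
           - ln (ln (real P0)) - (SS P0 - c) / ln (real P0) + 1 / real P0 - 1 / real N" by (rule step.IH)
  show ?case unfolding Ls SSs eq using IH X bb eq2 by argo
qed



lemma ln_split: fixes a b :: real assumes "0 < a" "a \<le> b" shows "ln b = ln a + ln (b / a)"
  using assms by (simp add: ln_div)

lemma ln_pow2: "ln ((2::real)^k) = real k * ln 2" by (simp add: ln_realpow)

lemma ln4_eq: "ln (4::real) = 2 * ln 2" using ln_pow2[of 2] by simp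
lemma ln8_eq: "ln (8::real) = 3 * ln 2" using ln_pow2[of 3] by simp
lemma ln32_eq: "ln (32::real) = 5 * ln 2" using ln_pow2[of 5] by simp

lemma lnln4_le: "ln (ln (4::real)) \<le> 3347/10000" and lnln4_pos: "ln (ln (4::real)) > 0"
proof -
  have a: "ln (4::real) \<le> 13892/10000" using ln4_eq ln2_hi by simp
  have b: "ln (4::real) \<ge> 13848/10000" using ln4_eq ln2_lo by simp
  have "ln (ln (4::real)) \<le> ln (13892/10000)" by (rule ln_mono) (use a b in auto)
  also have "\<dots> \<le> ((13892/10000) - 1/(13892/10000))/2" by (rule ln_ub) simp
  also have "\<dots> \<le> 3347/10000" by simp
  finally show "ln (ln (4::real)) \<le> 3347/10000" .
  show "ln (ln (4::real)) > 0" using b by simp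
qed

lemma ln5_lo: "ln (5::real) \<ge> 2 * (6924/10000) + 2/9"
proof -
  have "ln (5::real) = ln 4 + ln (5/4)" by (rule ln_split) auto
  moreover have "2*(5/4-1)/(5/4+1) \<le> ln (5/4::real)" by (rule ln_lb) simp
  ultimately show ?thesis using ln4_eq ln2_lo by simp
qed

lemma ln10_lo: "ln (10::real) \<ge> 3 * (6924/10000) + 2/9"
proof -
  have "ln (10::real) = ln 8 + ln (10/8)" by (rule ln_split) auto
  moreover have "2*(10/8-1)/(10/8+1) \<le> ln (10/8::real)" by (rule ln_lb) simp
  ultimately show ?thesis using ln8_eq ln2_lo by simp
qed

lemma ln11_lo: "ln (11::real) \<ge> 3 * (6924/10000) + 6/19"
proof -
  have "ln (11::real) = ln 8 + ln (11/8)" by (rule ln_split) auto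
  moreover have "2*(11/8-1)/(11/8+1) \<le> ln (11/8::real)" by (rule ln_lb) simp
  ultimately show ?thesis using ln8_eq ln2_lo by simp
qed

lemma ln29_bounds: "ln (29::real) \<ge> 5 * (6924/10000) - ((32/29) - 1/(32/29))/2"
  "ln (29::real) \<le> 5 * (6946/10000) - 6/61"
proof -
  have e: "ln (32::real) = ln 29 + ln (32/29)" by (rule ln_split) auto
  have "ln (32/29::real) \<le> ((32/29) - 1/(32/29))/2" by (rule ln_ub) simp
  then show "ln (29::real) \<ge> 5 * (6924/10000) - ((32/29) - 1/(32/29))/2" using e ln32_eq ln2_lo by simp
  have "2*(32/29-1)/(32/29+1) \<le> ln (32/29::real)" by (rule ln_lb) simp
  then show "ln (29::real) \<le> 5 * (6946/10000) - 6/61" using e ln32_eq ln2_hi by simp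
qed

lemma ln30_lo: "ln (30::real) \<ge> 5 * (6924/10000) - ((32/29) - 1/(32/29))/2 + 2/59"
proof -
  have "ln (30::real) = ln 29 + ln (30/29)" by (rule ln_split) auto
  moreover have "2*(30/29-1)/(30/29+1) \<le> ln (30/29::real)" by (rule ln_lb) simp
  ultimately show ?thesis using ln29_bounds(1) by simp
qed

lemma exp_le_pow8: fixes z :: real assumes "0 \<le> z" "z < 8" shows "exp z \<le> (1/(1 - z/8))^8"
proof -
  have "1 - z/8 \<le> exp (-(z/8))" using exp_ge_add_one_self[of "-(z/8)"] by simp
  then have "exp (z/8) \<le> 1/(1 - z/8)" using assms by (simp add: exp_minus field_simps)
  then have "exp (z/8) ^ 8 \<le> (1/(1 - z/8))^8" by (rule power_mono) simp
  moreover have "exp (z/8) ^ 8 = exp z" by (simp add: exp_of_nat_mult[symmetric])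
  ultimately show ?thesis by simp
qed

lemma pow8_mono: assumes "0 \<le> z" "z \<le> w" "w < 8" shows "(1/(1 - z/8))^8 \<le> (1/(1 - w/8::real))^8"
  by (rule power_mono) (use assms in \<open>auto simp: divide_simps\<close>)



lemma prod_subset_le:
  fixes f :: "'a \<Rightarrow> real"
  assumes "finite T" "S \<subseteq> T" "\<And>x. x \<in> T \<Longrightarrow> 1 \<le> f x"
  shows "prod f S \<le> prod f T"
proof -
  have "prod f T = prod f S * prod f (T - S)"
    using prod.subset_diff[OF assms(2,1)] by (simp add: mult.commute)
  moreover have "prod f (T - S) \<ge> 1" by (rule prod_ge_1) (use assms in auto)
  moreover have "prod f S \<ge> 0" by (rule prod_nonneg) (use assms in force)
  ultimately show ?thesis by (metis mult_left_mono mult.right_neutral)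
qed

lemma prime_29: "prime (29::nat)" by (simp add: prime_nat_iff' atLeastLessThan_upt upt_rec)
lemma prime_23: "prime (23::nat)" by (simp add: prime_nat_iff' atLeastLessThan_upt upt_rec)
lemma prime_19: "prime (19::nat)" by (simp add: prime_nat_iff' atLeastLessThan_upt upt_rec)
lemma prime_17: "prime (17::nat)" by (simp add: prime_nat_iff' atLeastLessThan_upt upt_rec)
lemma prime_13: "prime (13::nat)" by (simp add: prime_nat_iff' atLeastLessThan_upt upt_rec)
lemma prime_11: "prime (11::nat)" by (simp add: prime_nat_iff' atLeastLessThan_upt upt_rec)
lemma prime_7: "prime (7::nat)" by (simp add: prime_nat_iff' atLeastLessThan_upt upt_rec)
lemma prime_5: "prime (5::nat)" by (simp add: prime_nat_iff' atLeastLessThan_upt upt_rec)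
lemma prime_3: "prime (3::nat)" by (simp add: prime_nat_iff' atLeastLessThan_upt upt_rec)

lemma PU29_eq: "PU 29 = {2,3,5,7,11,13,17,19,23,29}"
proof
  show "PU 29 \<subseteq> {2,3,5,7,11,13,17,19,23,29}"
  proof
    fix p assume "p \<in> PU 29"
    then have p: "prime p" "p \<le> 29" by (auto simp: PU_def)
    have d: "q dvd p \<Longrightarrow> q = 1 \<or> q = p" for q using p(1) by (simp add: prime_nat_iff)
    have "p > 1" using p(1) prime_gt_1_nat by blast
    moreover have "2 dvd p \<Longrightarrow> p = 2" "3 dvd p \<Longrightarrow> p = 3" "5 dvd p \<Longrightarrow> p = 5" using d by force+
    ultimately show "p \<in> {2,3,5,7,11,13,17,19,23,29}" using p(2) by simp presburger
  qed
  show "{2,3,5,7,11,13,17,19,23,29} \<subseteq> PU 29"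
    using prime_29 prime_23 prime_19 prime_17 prime_13 prime_11 prime_7 prime_5 prime_3 two_is_prime_nat
    by (auto simp: PU_def)
qed

lemma F29_val: "(\<Prod>p\<in>PU 29. real p / (real p - 1)) = 2*(3/2)*(5/4)*(7/6)*(11/10)*(13/12)*(17/16)*(19/18)*(23/22)*(29/28)"
  unfolding PU29_eq by simp

lemma SS29_lo: "SS 29 \<ge> 1925/1000"
proof -
  have m: "k * ln 2 \<le> ln (real p)" if "2^k \<le> p" for k p :: nat
  proof -
    have "ln ((2::real)^k) \<le> ln (real p)" by (rule ln_mono) (use that in \<open>simp_all add: of_nat_le_iff[symmetric]\<close>)
    then show ?thesis by (simp add: ln_realpow)
  qed
  have "SS 29 = ln 2/2 + ln 3/3 + ln 5/5 + ln 7/7 + ln 11/11 + ln 13/13 + ln 17/17 + ln 19/19 + ln 23/23 + ln 29/29"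
    unfolding SS_def PU29_eq by simp
  moreover have "ln (3::real) \<ge> 1 * ln 2" using m[of 1 3] by simp
  moreover have "ln (5::real) \<ge> 2 * ln 2" using m[of 2 5] by simp
  moreover have "ln (7::real) \<ge> 2 * ln 2" using m[of 2 7] by simp
  moreover have "ln (11::real) \<ge> 3 * ln 2" using m[of 3 11] by simp
  moreover have "ln (13::real) \<ge> 3 * ln 2" using m[of 3 13] by simp
  moreover have "ln (17::real) \<ge> 4 * ln 2" using m[of 4 17] by simp
  moreover have "ln (19::real) \<ge> 4 * ln 2" using m[of 4 19] by simp
  moreover have "ln (23::real) \<ge> 4 * ln 2" using m[of 4 23] by simp
  moreover have "ln (29::real) \<ge> 4 * ln 2" using m[of 4 29] by simp
  ultimately have "SS 29 \<ge> ln 2 * (17987096977/6469693230)" by linarith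
  moreover have "ln 2 * (17987096977/6469693230) \<ge> (6924/10000) * (17987096977/6469693230::real)"
    using ln2_lo by (intro mult_right_mono) auto
  ultimately show ?thesis by simp
qed



lemma split_bound:
  assumes n: "n \<ge> 1" and N: "N \<ge> 2" and lt: "ln (real n) < real N + 1"
  shows "real (divisor_sigma n) \<le> real n * ((\<Prod>p\<in>PU N. real p / (real p - 1)) * exp ((real N + 1) / (real N * ln (real N + 1))))"
proof -
  define f where "f = (\<lambda>p::nat. real p / (real p - 1))"
  define PF where "PF = prime_factors n"
  define A where "A = {p\<in>PF. p \<le> N}"
  define B where "B = {p\<in>PF. \<not> p \<le> N}"
  have finPF: "finite PF" unfolding PF_def by simp
  have primePF: "\<And>p. p \<in> PF \<Longrightarrow> prime p" unfolding PF_def by auto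
  have f1: "1 \<le> f p" if "prime p" for p
  proof -
    have "real p \<ge> 2" using prime_ge_2_nat[OF that] by simp
    then show ?thesis unfolding f_def by (simp add: field_simps)
  qed
  have f0: "0 \<le> f p" if "prime p" for p using f1[OF that] by simp
  have U: "PF = A \<union> B" "A \<inter> B = {}" unfolding A_def B_def by auto
  have finA: "finite A" and finB: "finite B" using finPF unfolding A_def B_def by auto
  have split: "prod f PF = prod f A * prod f B"
    unfolding U(1) by (rule prod.union_disjoint[OF finA finB U(2)])
  have Ale: "prod f A \<le> prod f (PU N)"
    by (rule prod_subset_le) (auto simp: A_def PU_def primePF f1)
  have Bf: "f p \<le> 1 + 1 / real N" if "p \<in> B" for p
  proof -
    have "p \<ge> N + 1" using that unfolding B_def by auto
    then have "real p - 1 \<ge> real N" by simp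
    moreover have "f p = 1 + 1 / (real p - 1)" using \<open>p \<ge> N+1\<close> N unfolding f_def by (simp add: field_simps)
    ultimately show ?thesis using N by (simp add: frac_le)
  qed
  have "prod f B \<le> (\<Prod>p\<in>B. 1 + 1 / real N)"
    by (rule prod_mono) (use Bf f0 primePF in \<open>auto simp: B_def\<close>)
  also have "\<dots> = (1 + 1 / real N) ^ card B" by simp
  also have "\<dots> \<le> exp (1 / real N) ^ card B"
    by (rule power_mono) (use exp_ge_add_one_self[of "1/real N"] in auto)
  also have "\<dots> = exp (real (card B) / real N)" by (simp add: exp_of_nat_mult[symmetric])
  finally have Ble: "prod f B \<le> exp (real (card B) / real N)" .
  have "(real N + 1) ^ card B = (\<Prod>p\<in>B. real N + 1)" by simp
  also have "\<dots> \<le> (\<Prod>p\<in>B. real p)"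
    by (rule prod_mono) (auto simp: B_def)
  also have "\<dots> \<le> (\<Prod>p\<in>PF. real p)"
    by (rule prod_subset_le[OF finPF]) (auto simp: B_def Suc_le_eq dest: primePF prime_gt_0_nat)
  also have "\<dots> = real (\<Prod>p\<in>PF. p)" by (simp add: of_nat_prod)
  also have "\<dots> \<le> real n" unfolding PF_def using prod_pf_le[of n] n by (simp only: of_nat_le_iff)
  finally have pw: "(real N + 1) ^ card B \<le> real n" .
  have lnN1: "ln (real N + 1) > 0" using N by simp
  have "real (card B) * ln (real N + 1) = ln ((real N + 1) ^ card B)" by (simp add: ln_realpow)
  also have "\<dots> \<le> ln (real n)" by (rule ln_mono[OF pw]) simp
  finally have "real (card B) * ln (real N + 1) < real N + 1" using lt by linarith
  then have "real (card B) < (real N + 1) / ln (real N + 1)" using lnN1 by (simp add: field_simps)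
  then have "real (card B) / real N \<le> (real N + 1) / (real N * ln (real N + 1))"
    using N by (simp add: field_simps)
  then have Ble2: "prod f B \<le> exp ((real N + 1) / (real N * ln (real N + 1)))"
    using Ble by (meson exp_le_cancel_iff order_trans)
  have "real (divisor_sigma n) \<le> real n * prod f PF"
    using sigma_prod[of n] n unfolding f_def PF_def by simp
  also have "\<dots> = real n * (prod f A * prod f B)" by (simp add: split)
  also have "\<dots> \<le> real n * (prod f (PU N) * exp ((real N + 1) / (real N * ln (real N + 1))))"
  proof (rule mult_left_mono)
    have "prod f A \<ge> 0" by (rule prod_nonneg) (auto simp: A_def intro: f0 primePF)
    have "prod f B \<ge> 0" by (rule prod_nonneg) (auto simp: B_def intro: f0 primePF)
    show "prod f A * prod f B \<le> prod f (PU N) * exp ((real N + 1) / (real N * ln (real N + 1)))"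
      by (rule mult_mono[OF Ale Ble2]) (use \<open>prod f A \<ge> 0\<close> \<open>prod f B \<ge> 0\<close> Ale in auto)
  qed simp
  finally show ?thesis unfolding f_def .
qed



lemma piece: fixes a b x :: real assumes "0 < a" "a \<le> x" "x \<le> b"
  shows "ln a + (x - a) / b \<le> ln x"
proof -
  have x0: "x > 0" using assms by simp
  have "ln (a/x) \<le> a/x - 1" by (rule ln_le_minus_one) (use assms in simp)
  moreover have "ln (a/x) = ln a - ln x" using assms x0 by (simp add: ln_div)
  moreover have "(x - a) / b \<le> (x - a) / x" using assms by (intro divide_left_mono) auto
  moreover have "(x - a) / x = 1 - a/x" using x0 by (simp add: field_simps)
  ultimately show ?thesis by linarith
qed

lemma case1: fixes x :: real assumes "2 \<le> x" "x \<le> 11" shows "1 + x \<le> 5228/1000 * ln x"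
proof -
  consider "x \<le> 5" | "5 \<le> x" "x \<le> 8" | "8 \<le> x" by linarith
  then show ?thesis
  proof cases
    case 1
    have "ln 2 + (x - 2)/5 \<le> ln x" by (rule piece) (use assms 1 in auto)
    then show ?thesis using ln2_lo assms 1 by (simp add: field_simps)
  next
    case 2
    have "ln 5 + (x - 5)/8 \<le> ln x" by (rule piece) (use assms 2 in auto)
    then show ?thesis using ln5_lo assms 2 by (simp add: field_simps)
  next
    case 3
    have "ln 8 + (x - 8)/11 \<le> ln x" by (rule piece) (use assms 3 in auto)
    then show ?thesis using ln8_eq ln2_lo assms 3 by (simp add: field_simps)
  qed
qed

lemma main_bound:
  assumes n8: "n \<ge> 8"
  shows "real (divisor_sigma n) \<le> real n * (5228/1000 * ln (ln (real n)))"
proof -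
  define x where "x = ln (real n)"
  have n0: "real n > 0" and n1: "n \<ge> 1" using n8 by auto
  have "ln (8::real) \<le> x" unfolding x_def by (rule ln_mono) (use n8 in auto)
  then have x2: "x \<ge> 2" using ln8_eq ln2_lo by linarith
  show ?thesis
  proof (cases "x \<le> 11")
    case True
    have "real (divisor_sigma n) \<le> real n * (1 + x)" unfolding x_def by (rule sigma_harm) (use n8 in simp)
    also have "\<dots> \<le> real n * (5228/1000 * ln x)"
      by (rule mult_left_mono[OF case1[OF x2 True]]) simp
    finally show ?thesis unfolding x_def .
  next
    case False
    define N where "N = nat \<lfloor>x\<rfloor>"
    have Nle: "real N \<le> x" and Nlt: "x < real N + 1" unfolding N_def using x2
      by (auto simp: of_nat_nat)
    have N11: "N \<ge> 11" unfolding N_def using False by (simp add: le_nat_floor)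
    have rN: "real N \<ge> 11" using N11 by simp
    have lnNx: "ln (real N) \<le> ln x" by (rule ln_mono[OF Nle]) (use rN in simp)
    define P where "P = (\<Prod>p\<in>PU N. real p / (real p - 1))"
    define t where "t = (real N + 1) / (real N * ln (real N + 1))"
    have SB: "real (divisor_sigma n) \<le> real n * (P * exp t)"
      unfolding P_def t_def by (rule split_bound[OF n1]) (use N11 Nlt x_def in auto)
    have F29: "(\<Prod>p\<in>PU 29. real p / (real p - 1)) = 2*(3/2)*(5/4)*(7/6)*(11/10)*(13/12)*(17/16)*(19/18)*(23/22)*(29/28)"
      by (rule F29_val)
    have fge1: "\<And>p. p \<in> PU M \<Longrightarrow> 1 \<le> real p / (real p - 1)" for M
    proof -
      fix p assume "p \<in> PU M"
      then have "real p \<ge> 2" by (auto simp: PU_def dest: prime_ge_2_nat)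
      then show "1 \<le> real p / (real p - 1)" by (simp add: field_simps)
    qed
    have lnN1: "ln (real N + 1) > 0" using rN by simp
    have Pnn: "P \<ge> 0" unfolding P_def by (rule prod_nonneg) (use fge1 in force)
    show ?thesis
    proof (cases "N \<le> 28")
      case True
      have "P \<le> (\<Prod>p\<in>PU 29. real p / (real p - 1))"
        unfolding P_def by (rule prod_subset_le) (use True fge1 in \<open>auto simp: PU_def\<close>)
      then have P29: "P \<le> 2*(3/2)*(5/4)*(7/6)*(11/10)*(13/12)*(17/16)*(19/18)*(23/22)*(29/28)" using F29 by simp
      have a11: "ln 11 \<le> ln (real N + 1)" by (rule ln_mono) (use rN in auto)
      have l11: "ln (real N + 1) \<ge> 23929/10000" using a11 ln11_lo by linarith
      have "t = ((real N + 1) / real N) / ln (real N + 1)" unfolding t_def by simp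
      also have "\<dots> \<le> (11/10) / ln (real N + 1)"
        by (rule divide_right_mono) (use rN lnN1 in \<open>auto simp: field_simps\<close>)
      also have "\<dots> \<le> (11/10) / (23929/10000)"
        by (rule divide_left_mono) (use l11 rN in auto)
      also have "\<dots> \<le> 46/100" by simp
      finally have t46: "t \<le> 46/100" .
      have t0: "t \<ge> 0" unfolding t_def using rN lnN1 by simp
      have "exp t \<le> (1/(1 - t/8))^8" by (rule exp_le_pow8) (use t0 t46 in auto)
      also have "\<dots> \<le> (1/(1 - (46/100)/8))^8" by (rule pow8_mono) (use t0 t46 in auto)
      finally have Et: "exp t \<le> (1/(1 - (46/100)/8))^8" .
      have "P * exp t \<le> (2*(3/2)*(5/4)*(7/6)*(11/10)*(13/12)*(17/16)*(19/18)*(23/22)*(29/28)) * (1/(1 - (46/100)/8))^8"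
        by (rule mult_mono[OF P29 Et]) (use Pnn in auto)
      also have "\<dots> \<le> 5228/1000 * (3 * (6924/10000) + 2/9)" by (simp add: power_divide)
      also have "\<dots> \<le> 5228/1000 * ln 10" using ln10_lo by simp
      also have "\<dots> \<le> 5228/1000 * ln x"
      proof -
        have "ln 10 \<le> ln (real N)" by (rule ln_mono) (use rN in auto)
        then show ?thesis using lnNx by simp
      qed
      finally have "P * exp t \<le> 5228/1000 * ln x" .
      then have "real n * (P * exp t) \<le> real n * (5228/1000 * ln x)" by (rule mult_left_mono) simp
      with SB show ?thesis unfolding x_def by linarith
    next
      case False
      then have N29: "N \<ge> 29" by simp
      have sub: "PU 29 \<subseteq> PU N" using N29 by (auto simp: PU_def)
      define f where "f = (\<lambda>p::nat. real p / (real p - 1))"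
      define Q where "Q = prod f (PU N - PU 29)"
      have PQ: "P = Q * prod f (PU 29)"
        unfolding P_def Q_def f_def by (rule prod.subset_diff[OF sub finite_PU])
      have Q0: "Q \<ge> 0" unfolding Q_def by (rule prod_nonneg) (use fge1 in \<open>force simp: f_def\<close>)
      have "Q \<le> (\<Prod>p\<in>PU N - PU 29. exp (1 / (real p - 1)))"
        unfolding Q_def
      proof (rule prod_mono)
        fix p assume "p \<in> PU N - PU 29"
        then have p2: "real p \<ge> 2" by (auto simp: PU_def dest: prime_ge_2_nat)
        have "f p = 1 + 1 / (real p - 1)" unfolding f_def using p2 by (simp add: field_simps)
        also have "\<dots> \<le> exp (1 / (real p - 1))" by (rule exp_ge_add_one_self)
        finally show "0 \<le> f p \<and> f p \<le> exp (1 / (real p - 1))" unfolding f_def using p2 by simp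
      qed
      also have "\<dots> = exp (\<Sum>p\<in>PU N - PU 29. 1 / (real p - 1))" by (simp add: exp_sum)
      finally have Qexp: "Q \<le> exp (\<Sum>p\<in>PU N - PU 29. 1 / (real p - 1))" .
      have hyp: "SS m \<le> ln (real m) + 1/2" if "m \<ge> 29" for m
        unfolding SS_def by (rule S_le) (use that in simp)
      have ab: "(\<Sum>p\<in>PU N - PU 29. 1 / (real p - 1)) \<le> (SS N - 1/2) / ln (real N) + ln (ln (real N))
           - ln (ln (real 29)) - (SS 29 - 1/2) / ln (real 29) + 1 / real 29 - 1 / real N"
        by (rule abel_step[of 29 "1/2" N]) (use hyp N29 in auto)
      have lnN: "ln (real N) > 0" using rN by simp
      have t1: "(SS N - 1/2) / ln (real N) \<le> 1" using hyp[OF N29] lnN by (simp add: divide_le_eq)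
      have l29: "ln (29::real) \<le> 33747/10000" "ln (29::real) \<ge> 33634/10000" using ln29_bounds by simp_all
      have s29: "SS 29 - 1/2 \<ge> 1425/1000" using SS29_lo by simp
      have t2: "(1425/1000) / (33747/10000) \<le> (SS 29 - 1/2) / ln (29::real)"
        by (rule frac_le) (use s29 l29 in auto)
      have invN: "1 / real N \<ge> 0" by simp
      have gen: "\<And>S a c d b e q::real. S \<le> a + c - d - b + q - e \<Longrightarrow> a \<le> 1 \<Longrightarrow> 14250/33747 \<le> b
          \<Longrightarrow> 0 \<le> e \<Longrightarrow> q \<le> 1/29 \<Longrightarrow> S \<le> c - d + 6123/10000" by linarith
      have t2': "14250/33747 \<le> (SS 29 - 1/2) / ln (real 29)" using t2 by simp
      have q29: "1 / real 29 \<le> (1::real)/29" by simp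
      have sumb0: "(\<Sum>p\<in>PU N - PU 29. 1 / (real p - 1)) \<le> ln (ln (real N)) - ln (ln (real 29)) + 6123/10000"
        by (rule gen[OF ab t1 t2' invN q29])
      have sumb: "(\<Sum>p\<in>PU N - PU 29. 1 / (real p - 1)) \<le> ln (ln (real N)) - ln (ln 29) + 6123/10000"
        using sumb0 by simp
      have l30: "ln (real N + 1) \<ge> 33972/10000"
      proof -
        have a30: "ln 30 \<le> ln (real N + 1)" by (rule ln_mono) (use N29 in auto)
        have b30: "ln (30::real) \<ge> 33972/10000" using ln30_lo by simp
        show ?thesis using a30 b30 by linarith
      qed
      have lnN1': "ln (real N + 1) > 0" using l30 by linarith
      have "t = ((real N + 1) / real N) / ln (real N + 1)" unfolding t_def by simp
      also have "\<dots> \<le> (30/29) / ln (real N + 1)"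
        by (rule divide_right_mono) (use N29 lnN1' in \<open>auto simp: field_simps\<close>)
      also have "\<dots> \<le> (30/29) / (33972/10000)"
        by (rule divide_left_mono) (use l30 N29 in auto)
      also have "\<dots> \<le> 3046/10000" by simp
      finally have tb: "t \<le> 3046/10000" .
      have lnlnN: "exp (ln (ln (real N)) - ln (ln 29)) = ln (real N) / ln 29"
        using lnN l29 by (simp add: exp_diff)
      have "Q \<le> exp (ln (ln (real N)) - ln (ln 29) + 6123/10000)"
        using Qexp sumb by (meson exp_le_cancel_iff order_trans)
      also have "\<dots> = (ln (real N) / ln 29) * exp (6123/10000)" by (simp add: exp_add lnlnN)
      finally have Qb: "Q \<le> (ln (real N) / ln 29) * exp (6123/10000)" .
      have "exp (6123/10000) * exp t = exp (6123/10000 + t)" by (simp add: exp_add)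
      also have "\<dots> \<le> exp (92/100)" using tb by simp
      also have "\<dots> \<le> (1/(1 - (92/100)/8))^8" by (rule exp_le_pow8) auto
      finally have E2: "exp (6123/10000) * exp t \<le> (1/(1 - (92/100)/8))^8" .
      have F29': "prod f (PU 29) = 2*(3/2)*(5/4)*(7/6)*(11/10)*(13/12)*(17/16)*(19/18)*(23/22)*(29/28)"
        unfolding f_def by (rule F29_val)
      have "P * exp t = prod f (PU 29) * (Q * exp t)" using PQ by simp
      also have "\<dots> \<le> prod f (PU 29) * ((ln (real N) / ln 29) * exp (6123/10000) * exp t)"
      proof (rule mult_left_mono)
        show "Q * exp t \<le> (ln (real N) / ln 29) * exp (6123/10000) * exp t"
          by (rule mult_right_mono[OF Qb]) simp
      qed (simp add: F29')
      also have "\<dots> = prod f (PU 29) * (ln (real N) / ln 29) * (exp (6123/10000) * exp t)" by simp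
      also have "\<dots> \<le> prod f (PU 29) * (ln (real N) / ln 29) * (1/(1 - (92/100)/8))^8"
        by (rule mult_left_mono[OF E2]) (use lnN l29 in \<open>auto simp: F29'\<close>)
      also have "\<dots> = ln (real N) * ((2*(3/2)*(5/4)*(7/6)*(11/10)*(13/12)*(17/16)*(19/18)*(23/22)*(29/28)) * (1/(1 - (92/100)/8))^8 / ln 29)"
        unfolding F29' by simp
      also have "\<dots> \<le> ln (real N) * (5228/1000)"
      proof (rule mult_left_mono)
        have "(2*(3/2)*(5/4)*(7/6)*(11/10)*(13/12)*(17/16)*(19/18)*(23/22)*(29/28)) * (1/(1 - (92/100)/8))^8
            \<le> 5228/1000 * (33634/10000::real)" by (simp add: power_divide)
        also have "\<dots> \<le> 5228/1000 * ln 29" using l29 by simp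
        finally have c: "(2*(3/2)*(5/4)*(7/6)*(11/10)*(13/12)*(17/16)*(19/18)*(23/22)*(29/28)) * (1/(1 - (92/100)/8))^8 \<le> 5228/1000 * ln (29::real)" .
        have l29p: "ln (29::real) > 0" by simp
        show "(2*(3/2)*(5/4)*(7/6)*(11/10)*(13/12)*(17/16)*(19/18)*(23/22)*(29/28)) * (1/(1 - (92/100)/8))^8 / ln (29::real) \<le> 5228/1000"
          using c l29p by (simp only: divide_le_eq) simp
      qed (use lnN in simp)
      also have "\<dots> \<le> 5228/1000 * ln x" using lnNx by simp
      finally have "P * exp t \<le> 5228/1000 * ln x" .
      then have "real n * (P * exp t) \<le> real n * (5228/1000 * ln x)" by (rule mult_left_mono) simp
      with SB show ?thesis unfolding x_def by linarith
    qed
  qed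
qed



lemma sigma4: "divisor_sigma 4 = 7"
proof -
  have "{d::nat. d dvd 4 \<and> d > 0} = {1,2,4}"
  proof (intro set_eqI iffI)
    fix d assume "d \<in> {d::nat. d dvd 4 \<and> d > 0}"
    then have d: "d dvd 4" "d > 0" by auto
    then have "d \<le> 4" by (intro dvd_imp_le) auto
    then have "d = 1 \<or> d = 2 \<or> d = 3 \<or> d = 4" using d(2) by auto
    then show "d \<in> {1,2,4}" using d(1) by auto
  qed auto
  then show ?thesis unfolding divisor_sigma_def by simp
qed

lemma G4: "G 4 = 7 / (4 * ln (ln 4))" unfolding G_def sigma4 by simp

theorem mainTheorem2:
  shows "extraordinary 4"
proof -
  have l4: "ln (ln (4::real)) > 0" by (rule lnln4_pos)
  have G4pos: "G 4 \<ge> 0" unfolding G4 using l4 by simp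
  have np: "\<not> prime (4::nat)"
  proof
    assume "prime (4::nat)"
    then have "\<forall>m. m dvd (4::nat) \<longrightarrow> m = 1 \<or> m = 4" by (simp add: prime_nat_iff)
    then have "(2::nat) = 1 \<or> (2::nat) = 4" by (metis dvd_triv_left numeral_Bit0 mult_2)
    then show False by simp
  qed
  have i: "G 4 \<ge> G (4 div p)" if p: "prime p" "p dvd 4" for p
  proof -
    have "p dvd 2^2" using p by simp
    then have "p dvd 2" using p(1) prime_dvd_power by blast
    then have "p = 2" using p(1) by (metis prime_nat_iff two_is_prime_nat prime_gt_1_nat less_irrefl)
    then have "4 div p = 2" by simp
    moreover have "G 2 \<le> 0"
    proof -
      have "ln (ln (2::real)) < 0" using ln_2_less_1 by simp
      then show ?thesis unfolding G_def by (intro divide_nonneg_neg) auto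
    qed
    ultimately show ?thesis using G4pos by simp
  qed
  have ii: "G 4 \<ge> G (a * 4)" if a: "a > 0" for a
  proof (cases "a = 1")
    case True then show ?thesis by simp
  next
    case False
    then have n8: "a * 4 \<ge> 8" using a by simp
    define n where "n = a * 4"
    have n8': "n \<ge> 8" using n8 n_def by simp
    have rn: "real n \<ge> 8" using n8' by simp
    have "ln (8::real) \<le> ln (real n)" by (rule ln_mono) (use rn in auto)
    then have ln2: "ln (real n) \<ge> 2" using ln8_eq ln2_lo by linarith
    then have lln: "ln (ln (real n)) > 0" by simp
    have den: "real n * ln (ln (real n)) > 0" using rn lln by simp
    have "G n = real (divisor_sigma n) / (real n * ln (ln (real n)))" unfolding G_def by simp
    also have "\<dots> \<le> 5228/1000"
      using main_bound[OF n8'] den by (simp add: divide_le_eq algebra_simps)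
    also have "\<dots> \<le> 7 / (4 * ln (ln 4))"
    proof -
      have "4 * ln (ln (4::real)) \<le> 4 * (3347/10000)" using lnln4_le by simp
      then have "7 / (4 * (3347/10000)) \<le> 7 / (4 * ln (ln (4::real)))"
        by (rule divide_left_mono) (use l4 in auto)
      then show ?thesis by simp
    qed
    finally show ?thesis unfolding G4 n_def .
  qed
  show ?thesis unfolding extraordinary_def using np i ii by auto
qed



end
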